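(* Let particles occupy a finite connected set of nodes of the triangular grid, where every particle has ports $0,\dots,5$ with port $0$ leading East and port $3$ leading West for all particles, and ports $i$, $i+1 \bmod 6$ leading to adjacent nodes, the circular orientation of the other ports possibly differing between particles. Let $G$ be a grey component, and let $\{p,p'\}$ be a pair of particles of $G$ that are neighbours on at least one boundary of $G$, where boundaries of $G$ are taken with both endpoints of every dark blue edge treating the other endpoint as a non-particle node. Suppose every particle forwards messages along boundaries by the following procedure. If $p_s,p_1,p_2$ are consecutive particles on a boundary $B$, $o_1$ is the common non-particle neighbour of $p_s,p_1$ on $B$ and $o_2$ the common non-particle neighbour of $p_1,p_2$ on $B$, then when $p_s$ sends a message to $p_1$ it attaches as boundary-label the label, in $p_1$'s own port numbering, of the port of $p_1$ leading to $o_1$. When $p_1$ receives the message through its port $z$, it takes as next particle the first particle reached when following its ports in the cyclic order $z$, boundary-label, $\dots$ (call it $p_2$); it determines whether it has the same chirality as $p_2$ (via port labels of the edge $p_1p_2$ if it is a grey edge, or via the common occupied neighbour if it is a light blue edge). Letting $x$ be the port of $p_1$ to $p_2$, $y$ the port of $p_2$ to $p_1$, and $i$ the port of $p_1$ to $o_2$, $p_1$ computes $j = y+1 \bmod 6$ if ($p_1,p_2$ have the same chirality and $i = x-1 \bmod 6$) or (they have different chirality and $i = x+1 \bmod 6$), and $j = y-1 \bmod 6$ otherwise; it then sends the message to $p_2$ with boundary-label $j$. A particle originating a message chooses the boundary on which it sends it and attaches the boundary-label accordingly. Then any message passed from $p$ to $p'$ by this procedure always remains on the same boundary, i.e., the boundary-label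 received by $p'$ is the label (in $p'$'s numbering) of the port of $p'$ leading to the common non-particle neighbour of $p$ and $p'$ defining the boundary on which the message is being forwarded.
   Context: A local boundary is a pair $(uv,o)$ where $uv$ is an edge between particle nodes and $o$ is a non-particle node adjacent to both $u$ and $v$. A boundary is a cyclic sequence of local boundaries $(u_1u_2,o_1),(u_2u_3,o_2),\dots,(u_ku_1,o_k)$ such that, rotating around $u_i$ from $u_{i-1}$ to $u_{i+1}$, only non-particle nodes are encountered, starting with $o_{i-1}$ and ending with $o_i$ (possibly $o_{i-1}=o_i$); $u,v$ with $(uv,o)$ on it are neighbours on the boundary. A horizontal path consists of particles that lie on at least one boundary and are connected through their ports $0$ and $3$. An edge of a horizontal path between two particles with no common neighbouring particle is a dark blue edge; an edge of a horizontal path between two particles with exactly one common neighbouring particle is a light blue edge; all other edges between particles are grey edges. A grey component is a maximal set of particles connected by grey and light blue edges (not using dark blue edges). Two particles joined by a grey edge through ports $i$ and $i'$ have the same chirality iff $i+3 \equiv i' \pmod 6$. *)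

theory Defs
  imports Main
begin

type_synonym node = "int \<times> int"

text \<open>Axial coordinates. Directions 0..5 in counterclockwise order, direction 0 = East,
  direction 3 = West; consecutive directions lead to adjacent nodes.\<close>
definition dir :: "nat \<Rightarrow> int \<times> int" where
  "dir k = [(1,0),(0,1),(-1,1),(-1,0),(0,-1),(1,-1)] ! (k mod 6)"

definition step_node :: "node \<Rightarrow> nat \<Rightarrow> node" where
  "step_node u k = (fst u + fst (dir k), snd u + snd (dir k))"

definition adj :: "node \<Rightarrow> node \<Rightarrow> bool" where
  "adj u v \<longleftrightarrow> (\<exists>k<6. v = step_node u k)"

definition dir_to :: "node \<Rightarrow> node \<Rightarrow> nat" where
  "dir_to u v = (THE k. k < 6 \<and> v = step_node u k)"

definition connected_nodes :: "node set \<Rightarrow> bool" where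
  "connected_nodes P \<longleftrightarrow>
     (\<forall>u\<in>P. \<forall>v\<in>P. (u, v) \<in> {(a, b). a \<in> P \<and> b \<in> P \<and> adj a b}\<^sup>*)"

text \<open>ch u = True: ports of u are numbered counterclockwise; False: clockwise.
  In both cases port 0 leads East and port 3 leads West.\<close>
definition port_node :: "(node \<Rightarrow> bool) \<Rightarrow> node \<Rightarrow> nat \<Rightarrow> node" where
  "port_node ch u i = step_node u (if ch u then i mod 6 else (6 - i mod 6) mod 6)"

definition port_to :: "(node \<Rightarrow> bool) \<Rightarrow> node \<Rightarrow> node \<Rightarrow> nat" where
  "port_to ch u v = (THE i. i < 6 \<and> port_node ch u i = v)"

text \<open>V u w: node u regards (adjacent) node w as a particle node; S: set of particle nodes.\<close>

definition local_bd :: "(node \<Rightarrow> node \<Rightarrow> bool) \<Rightarrow> node set \<Rightarrow> node \<times> node \<times> node \<Rightarrow> bool" where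
  "local_bd V S t = (case t of (u, v, c) \<Rightarrow>
      u \<in> S \<and> v \<in> S \<and> adj u v \<and> V u v \<and> V v u \<and>
      adj u c \<and> adj v c \<and> \<not> V u c \<and> \<not> V v c)"

text \<open>Rotating around u from a to b, only non-particle nodes are encountered,
  the first being c1 and the last being c2.\<close>
definition rot_ok :: "(node \<Rightarrow> node \<Rightarrow> bool) \<Rightarrow> node \<Rightarrow> node \<Rightarrow> node \<Rightarrow> node \<Rightarrow> node \<Rightarrow> bool" where
  "rot_ok V a u b c1 c2 \<longleftrightarrow>
     (\<exists>d\<in>{1,5}. \<exists>n. 2 \<le> n \<and> n \<le> 6 \<and>
        step_node u (dir_to u a + d) = c1 \<and>
        step_node u (dir_to u a + d * (n - 1)) = c2 \<and>
        step_node u (dir_to u a + d * n) = b \<and>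
        (\<forall>m. 1 \<le> m \<and> m < n \<longrightarrow> \<not> V u (step_node u (dir_to u a + d * m))))"

text \<open>A boundary: cyclic list of local boundaries (u_i u_{i+1}, o_i).\<close>
definition is_boundary :: "(node \<Rightarrow> node \<Rightarrow> bool) \<Rightarrow> node set \<Rightarrow> (node \<times> node \<times> node) list \<Rightarrow> bool" where
  "is_boundary V S B \<longleftrightarrow> B \<noteq> [] \<and>
     (\<forall>t<length B. local_bd V S (B ! t)) \<and>
     (\<forall>t<length B. case B ! t of (u, v, c) \<Rightarrow>
        (case B ! ((t + 1) mod length B) of (u', v', c') \<Rightarrow>
           v = u' \<and> rot_ok V u v v' c c'))"

definition on_bd :: "node set \<Rightarrow> node \<Rightarrow> bool" where
  "on_bd P u \<longleftrightarrow> (\<exists>B. is_boundary (\<lambda>_ w. w \<in> P) P B \<and> (\<exists>v c. (u, v, c) \<in> set B))"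

definition hedge :: "node set \<Rightarrow> node \<Rightarrow> node \<Rightarrow> bool" where
  "hedge P u v \<longleftrightarrow> u \<in> P \<and> v \<in> P \<and> on_bd P u \<and> on_bd P v \<and>
     (v = step_node u 0 \<or> u = step_node v 0)"

definition common_nbrs :: "node set \<Rightarrow> node \<Rightarrow> node \<Rightarrow> node set" where
  "common_nbrs P u v = {w \<in> P. adj u w \<and> adj v w}"

definition dark_blue :: "node set \<Rightarrow> node \<Rightarrow> node \<Rightarrow> bool" where
  "dark_blue P u v \<longleftrightarrow> hedge P u v \<and> common_nbrs P u v = {}"

definition light_blue :: "node set \<Rightarrow> node \<Rightarrow> node \<Rightarrow> bool" where
  "light_blue P u v \<longleftrightarrow> hedge P u v \<and> card (common_nbrs P u v) = 1"

definition grey :: "node set \<Rightarrow> node \<Rightarrow> node \<Rightarrow> bool" where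
  "grey P u v \<longleftrightarrow> u \<in> P \<and> v \<in> P \<and> adj u v \<and> \<not> dark_blue P u v \<and> \<not> light_blue P u v"

definition grey_component :: "node set \<Rightarrow> node set \<Rightarrow> bool" where
  "grey_component P G \<longleftrightarrow>
     (\<exists>p\<in>P. G = {q. (p, q) \<in> {(u, v). grey P u v \<or> light_blue P u v}\<^sup>*})"

text \<open>View inside grey component G: endpoints of dark blue edges regard each other as
  non-particle nodes; nodes outside G are non-particle nodes.\<close>
definition GV :: "node set \<Rightarrow> node set \<Rightarrow> node \<Rightarrow> node \<Rightarrow> bool" where
  "GV P G u w \<longleftrightarrow> w \<in> G \<and> \<not> dark_blue P u w"

text \<open>p1 receives through port z with boundary-label b; c2 is the common non-particle
  neighbour of p1 and the next particle on the boundary. Returns (p2, j).\<close>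
definition fwd :: "(node \<Rightarrow> bool) \<Rightarrow> (node \<Rightarrow> node \<Rightarrow> bool) \<Rightarrow> node \<Rightarrow> nat \<Rightarrow> nat \<Rightarrow> node \<Rightarrow> node \<times> nat" where
  "fwd ch V p1 z b c2 =
    (let d = (b + 6 - z) mod 6;
         m = (LEAST m. 0 < m \<and> m \<le> 6 \<and> V p1 (port_node ch p1 (z + d * m)));
         x = (z + d * m) mod 6;
         p2 = port_node ch p1 x;
         y = port_to ch p2 p1;
         i = port_to ch p1 c2;
         same = (ch p1 = ch p2);
         j = (if (same \<and> i = (x + 5) mod 6) \<or> (\<not> same \<and> i = (x + 1) mod 6)
              then (y + 1) mod 6 else (y + 5) mod 6)
     in (p2, j))"

text \<open>Hop n of a message originated by the particle at position s of boundary B: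
  (sender, receiver, boundary-label).\<close>
fun msg :: "(node \<Rightarrow> bool) \<Rightarrow> (node \<Rightarrow> node \<Rightarrow> bool) \<Rightarrow> (node \<times> node \<times> node) list \<Rightarrow> nat \<Rightarrow> nat
            \<Rightarrow> node \<times> node \<times> nat" where
  "msg ch V B s 0 = (case B ! (s mod length B) of (u, v, c) \<Rightarrow> (u, v, port_to ch v c))"
| "msg ch V B s (Suc n) = (case msg ch V B s n of (ps, p1, b) \<Rightarrow>
     (case B ! ((s + n + 1) mod length B) of (_, _, c2) \<Rightarrow>
        (case fwd ch V p1 (port_to ch p1 ps) b c2 of (p2, j) \<Rightarrow> (p1, p2, j))))"

end

theory Submission
  imports Defs
begin


definition pt :: "bool \<Rightarrow> nat \<Rightarrow> nat" where
  "pt c k = (if c then k mod 6 else (6 - k mod 6) mod 6)"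

lemma six_cases: "(k::nat) mod 6 \<in> {0,1,2,3,4,5}" by auto

lemma dir_mod: "dir (k mod 6) = dir k" by (simp add: dir_def)

lemma step_mod: "step_node u (k mod 6) = step_node u k"
  by (simp add: step_node_def dir_mod)

lemma dir_inj: "(a::nat) < 6 \<Longrightarrow> b < 6 \<Longrightarrow> dir a = dir b \<Longrightarrow> a = b"
proof -
  assume "a < 6" "b < 6" "dir a = dir b"
  then have "a \<in> {0,1,2,3,4,5}" "b \<in> {0,1,2,3,4,5}" by auto
  with \<open>dir a = dir b\<close> show "a = b" by (auto simp: dir_def)
qed

lemma step_eq: "step_node u a = step_node u b \<longleftrightarrow> a mod 6 = b mod 6"
proof
  assume "step_node u a = step_node u b"
  then have "dir a = dir b" by (simp add: step_node_def prod_eq_iff)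
  then have "dir (a mod 6) = dir (b mod 6)" by (simp add: dir_mod)
  then show "a mod 6 = b mod 6" using dir_inj[of "a mod 6" "b mod 6"] by simp
next
  assume "a mod 6 = b mod 6"
  then show "step_node u a = step_node u b" by (metis step_mod)
qed

lemma dir_to_step: "dir_to u (step_node u k) = k mod 6"
  unfolding dir_to_def by (rule the_equality) (auto simp: step_eq)

lemma port_node_eq: "port_node ch u i = step_node u (pt (ch u) i)"
  by (simp add: port_node_def pt_def)

lemma pt_lt: "pt c k < 6" by (simp add: pt_def)
lemma pt_mod: "pt c (k mod 6) = pt c k" by (simp add: pt_def)
lemma pt_inv: "pt c (pt c k) = k mod 6"
  using six_cases[of k] by (auto simp: pt_def)

lemma port_to_step: "port_to ch u (step_node u k) = pt (ch u) k"
  unfolding port_to_def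
proof (rule the_equality)
  show "pt (ch u) k < 6 \<and> port_node ch u (pt (ch u) k) = step_node u k"
    by (simp add: pt_lt port_node_eq pt_inv step_mod)
next
  fix i assume "i < 6 \<and> port_node ch u i = step_node u k"
  then have i: "i < 6" "pt (ch u) i mod 6 = k mod 6" by (auto simp: port_node_eq step_eq)
  then have "pt (ch u) i = k mod 6" using pt_lt[of "ch u" i] by simp
  then have "pt (ch u) (pt (ch u) i) = pt (ch u) k" by (metis pt_mod)
  then show "i = pt (ch u) k" using i by (simp add: pt_inv)
qed

lemma step_red: "step_node v (k + m) = step_node v (k mod 6 + m)"
  by (simp add: step_eq mod_add_left_eq)

lemma step_back: "step_node (step_node u k) (k+3) = u"
proof -
  have "step_node (step_node u k) (k+3) = step_node (step_node u (k mod 6)) (k mod 6+3)"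
    by (simp add: step_mod step_red[of _ k 3])
  also have "\<dots> = u" using six_cases[of k]
    by (auto simp: step_node_def dir_def)
  finally show ?thesis .
qed

lemma geo: assumes "d \<in> {1,5}"
  shows "step_node (step_node w (E+d)) (E+d+3+d) = step_node w E"
proof -
  have "step_node (step_node w (E+d)) (E+d+3+d) = step_node (step_node w (E mod 6+d)) (E mod 6+d+3+d)"
    by (metis step_red add.assoc)
  also have "\<dots> = step_node w (E mod 6)" using six_cases[of E] assms
    by (auto simp: step_node_def dir_def)
  finally show ?thesis by (simp add: step_mod)
qed

lemma back_adj: assumes "adj a w" shows "a = step_node w (dir_to w a)"
proof -
  obtain k where "w = step_node a k" using assms unfolding adj_def by auto
  then have a: "a = step_node w (k+3)" using step_back by simp
  have "dir_to w a = (k+3) mod 6" using a dir_to_step by metis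
  then show ?thesis using a step_mod by metis
qed

lemma pt_red: "pt c (k + m) = pt c (k mod 6 + m)"
  by (simp add: pt_def mod_add_left_eq)


lemma all6: "(\<forall>x::nat<6. P x) \<longleftrightarrow> P 0 \<and> P 1 \<and> P 2 \<and> P 3 \<and> P 4 \<and> P 5"
proof -
  have "{x::nat. x < 6} = {0,1,2,3,4,5}" by auto
  then show ?thesis by (smt (verit) empty_iff insert_iff mem_Collect_eq)
qed
lemma A0: "\<forall>c\<in>{True,False}. \<forall>d\<in>{1,5::nat}. \<forall>D<6. \<forall>m<6. (pt c D + ((pt c (D+d) + 6 - pt c D) mod 6) * m) mod 6 = pt c (D + d*m)"
  unfolding all6 ball_simps pt_def by simp
lemma F0: "\<forall>cw\<in>{True,False}. \<forall>cv\<in>{True,False}. \<forall>d\<in>{1,5::nat}. \<forall>E<6. (if (cw = cv \<and> pt cw E = (pt cw (E+d) + 5) mod 6) \<or> (cw \<noteq> cv \<and> pt cw E = (pt cw (E+d) + 1) mod 6)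
          then (pt cv (E+d+3) + 1) mod 6 else (pt cv (E+d+3) + 5) mod 6) = pt cv (E+d+3+d)"
  unfolding all6 ball_simps pt_def by simp

lemma pt_cong: "a mod 6 = b mod 6 \<Longrightarrow> pt c a = pt c b" by (simp add: pt_def)

lemma arithA: assumes d: "d \<in> {1,5}"
  shows "(pt c D + ((pt c (D+d) + 6 - pt c D) mod 6) * m) mod 6 = pt c (D + d*m)"
proof -
  have c: "c \<in> {True,False}" by auto
  have D: "D mod 6 < 6" and m: "m mod 6 < 6" by auto
  have h: "(pt c (D mod 6) + ((pt c (D mod 6+d) + 6 - pt c (D mod 6)) mod 6) * (m mod 6)) mod 6 = pt c (D mod 6 + d*(m mod 6))"
    using A0 c d D m by blast
  have e1: "pt c (D mod 6) = pt c D" and e2: "pt c (D mod 6+d) = pt c (D+d)"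
    by (rule pt_cong; simp add: mod_add_left_eq)+
  have e3: "pt c (D mod 6 + d*(m mod 6)) = pt c (D + d*m)"
    by (rule pt_cong) (metis mod_add_cong mod_mod_trivial mod_mult_right_eq)
  have e4: "(X + Y * (m mod 6)) mod 6 = (X + Y * m) mod 6" for X Y :: nat
    by (metis mod_add_right_eq mod_mult_right_eq)
  show ?thesis using h unfolding e1 e2 e3 e4 .
qed

lemma arithF: assumes d: "d \<in> {1,5}"
  shows "(if (cw = cv \<and> pt cw E = (pt cw (E+d) + 5) mod 6) \<or> (cw \<noteq> cv \<and> pt cw E = (pt cw (E+d) + 1) mod 6)
          then (pt cv (E+d+3) + 1) mod 6 else (pt cv (E+d+3) + 5) mod 6) = pt cv (E+d+3+d)"
proof -
  have c: "cw \<in> {True,False}" "cv \<in> {True,False}" by auto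
  have E: "E mod 6 < 6" by auto
  have h: "(if (cw = cv \<and> pt cw (E mod 6) = (pt cw (E mod 6+d) + 5) mod 6) \<or> (cw \<noteq> cv \<and> pt cw (E mod 6) = (pt cw (E mod 6+d) + 1) mod 6)
          then (pt cv (E mod 6+d+3) + 1) mod 6 else (pt cv (E mod 6+d+3) + 5) mod 6) = pt cv (E mod 6+d+3+d)"
    using F0 c d E by blast
  have e: "pt c (E mod 6 + k) = pt c (E + k)" for c k
    by (rule pt_cong; simp add: mod_add_left_eq)
  have e1: "pt cw (E mod 6) = pt cw E" by (rule pt_cong) simp
  show ?thesis using h unfolding e1 add.assoc e .
qed


lemma fwd_step:
  assumes bd: "is_boundary V S B" and t: "t < length B" and Bt: "B!t = (a,w,c)"
    and Bt1: "B!((t+1) mod length B) = (w',v',c')"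
  shows "fwd ch V w (port_to ch w a) (port_to ch w c) c' = (v', port_to ch v' c')"
proof -
  have L: "(t+1) mod length B < length B" using t by (intro mod_less_divisor) linarith
  note all = bd[unfolded is_boundary_def, THEN conjunct2, THEN conjunct1]
  note cyc = bd[unfolded is_boundary_def, THEN conjunct2, THEN conjunct2]
  have "local_bd V S (B!t)" using all t by blast
  then have loc: "local_bd V S (a,w,c)" by (simp only: Bt)
  have "local_bd V S (B!((t+1) mod length B))" using all L by blast
  then have loc': "local_bd V S (w',v',c')" by (simp only: Bt1)
  note cy = cyc[rule_format, OF t]
  have wr: "w = w' \<and> rot_ok V a w v' c c'" using cy unfolding Bt Bt1 prod.case .
  have ww: "w = w'" using wr by (rule conjunct1)
  have rot: "rot_ok V a w v' c c'" using wr by (rule conjunct2)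
  have Vwv: "V w v'" using loc' ww unfolding local_bd_def by simp
  define D0 where "D0 = dir_to w a"
  have "adj a w" using loc unfolding local_bd_def by simp
  then have aD: "a = step_node w D0" unfolding D0_def by (rule back_adj)
  obtain d n where d: "d \<in> {1,5}" and n: "2 \<le> n" "n \<le> 6"
    and c: "step_node w (D0 + d) = c" and c': "step_node w (D0 + d * (n - 1)) = c'"
    and v': "step_node w (D0 + d * n) = v'"
    and nV: "\<forall>m. 1 \<le> m \<and> m < n \<longrightarrow> \<not> V w (step_node w (D0 + d * m))"
  proof -
    from rot[unfolded rot_ok_def, folded D0_def] obtain d n where "d \<in> {1,5}" and
      H: "2 \<le> n \<and> n \<le> 6 \<and> step_node w (D0 + d) = c \<and> step_node w (D0 + d * (n - 1)) = c' \<and>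
        step_node w (D0 + d * n) = v' \<and> (\<forall>m. 1 \<le> m \<and> m < n \<longrightarrow> \<not> V w (step_node w (D0 + d * m)))"
      by (elim bexE exE) (rule that)
    then show ?thesis using that by blast
  qed
  define E where "E = D0 + d * (n - 1)"
  have EE: "D0 + d * n = E + d" unfolding E_def using n
    by (cases n) (auto simp: algebra_simps)
  define cw where "cw = ch w"
  define dd where "dd = (pt cw (D0+d) + 6 - pt cw D0) mod 6"
  have z: "port_to ch w a = pt cw D0" unfolding aD cw_def by (rule port_to_step)
  have b: "port_to ch w c = pt cw (D0+d)" unfolding c[symmetric] cw_def by (rule port_to_step)
  have pn: "port_node ch w (pt cw D0 + dd * m) = step_node w (D0 + d*m)" for m
  proof -
    have "port_node ch w (pt cw D0 + dd * m) = step_node w (pt cw (pt cw D0 + dd * m))"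
      by (simp add: port_node_eq cw_def)
    also have "pt cw (pt cw D0 + dd * m) = pt cw ((pt cw D0 + dd * m) mod 6)"
      by (simp add: pt_mod)
    also have "(pt cw D0 + dd * m) mod 6 = pt cw (D0 + d*m)" unfolding dd_def by (rule arithA[OF d])
    also have "pt cw (pt cw (D0 + d*m)) = (D0 + d*m) mod 6" by (rule pt_inv)
    finally show ?thesis by (simp add: step_mod)
  qed
  have least: "(LEAST m. 0 < m \<and> m \<le> 6 \<and> V w (port_node ch w (pt cw D0 + dd * m))) = n"
  proof (rule Least_equality)
    show "0 < n \<and> n \<le> 6 \<and> V w (port_node ch w (pt cw D0 + dd * n))"
      using n Vwv v' by (simp add: pn)
  next
    fix m assume "0 < m \<and> m \<le> 6 \<and> V w (port_node ch w (pt cw D0 + dd * m))"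
    then have "0 < m" "V w (step_node w (D0 + d * m))" by (simp_all add: pn)
    show "n \<le> m"
    proof (rule ccontr)
      assume "\<not> n \<le> m"
      then have "1 \<le> m \<and> m < n" using \<open>0 < m\<close> by simp
      then show False using nV \<open>V w (step_node w (D0 + d * m))\<close> by blast
    qed
  qed
  have x: "(pt cw D0 + dd * n) mod 6 = pt cw (E+d)" unfolding dd_def EE[symmetric] by (rule arithA[OF d])
  have p2: "port_node ch w (pt cw (E+d)) = v'"
  proof -
    have "port_node ch w (pt cw (E+d)) = port_node ch w ((pt cw D0 + dd * n) mod 6)" by (simp only: x)
    also have "\<dots> = port_node ch w (pt cw D0 + dd * n)" by (simp add: port_node_eq pt_mod)
    finally show ?thesis using pn[of n] v' by simp
  qed
  have vE: "v' = step_node w (E+d)" using v' EE by simp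
  have y: "port_to ch v' w = pt (ch v') (E+d+3)"
  proof -
    have "w = step_node v' (E+d+3)" unfolding vE by (rule step_back[symmetric])
    then show ?thesis by (metis port_to_step)
  qed
  have i: "port_to ch w c' = pt cw E" unfolding c'[symmetric] E_def[symmetric] cw_def by (rule port_to_step)
  have j: "port_to ch v' c' = pt (ch v') (E+d+3+d)"
    using geo[OF d, of w E] c' vE unfolding E_def by (metis port_to_step)
  have dd': "(pt cw (D0 + d) + 6 - pt cw D0) mod 6 = dd" by (simp add: dd_def)
  show ?thesis
    unfolding fwd_def Let_def z b dd' least x p2 y i j
    using arithF[OF d, of "ch w" "ch v'" E] unfolding cw_def by (simp only: prod.inject simp_thms)
qed

lemma msg_on_boundary:
  assumes bd: "is_boundary V S B" and s: "s < length B"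
  shows "msg ch V B s n = (case B ! ((s + n) mod length B) of (u, v, c) \<Rightarrow> (u, v, port_to ch v c))"
proof (induction n)
  case 0
  then show ?case using s by simp
next
  case (Suc n)
  define t where "t = (s + n) mod length B"
  have t: "t < length B" using s unfolding t_def by (intro mod_less_divisor) linarith
  obtain a w c where Bt: "B!t = (a,w,c)" by (metis prod_cases3)
  obtain w' v' c' where Bt1: "B!((t+1) mod length B) = (w',v',c')" by (metis prod_cases3)
  note cy = bd[unfolded is_boundary_def, THEN conjunct2, THEN conjunct2, rule_format, OF t]
  have wr: "w = w' \<and> rot_ok V a w v' c c'" using cy unfolding Bt Bt1 prod.case .
  have ww: "w = w'" using wr by (rule conjunct1)
  have idx: "(s + n + 1) mod length B = (t+1) mod length B" unfolding t_def by (simp add: mod_Suc_eq)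
  have idx2: "(s + Suc n) mod length B = (t+1) mod length B" using idx by simp
  have m: "msg ch V B s n = (a, w, port_to ch w c)" using Suc.IH Bt unfolding t_def by simp
  have "msg ch V B s (Suc n) = (case B!((s+n+1) mod length B) of (_,_,c2) \<Rightarrow>
      (case fwd ch V w (port_to ch w a) (port_to ch w c) c2 of (p2,j) \<Rightarrow> (w,p2,j)))"
    by (simp only: msg.simps m prod.case)
  also have "\<dots> = (w', v', port_to ch v' c')"
    unfolding idx Bt1 prod.case fwd_step[OF bd t Bt Bt1, of ch, folded ww] using ww by simp
  finally show ?case unfolding idx2 Bt1 by simp
qed

theorem theorem2:
  fixes P G :: "node set" and ch :: "node \<Rightarrow> bool"
    and B :: "(node \<times> node \<times> node) list" and s n :: nat
  assumes "finite P" and "P \<noteq> {}" and "connected_nodes P"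
    and "grey_component P G"
    and "is_boundary (GV P G) G B"
    and "s < length B"
  shows "msg ch (GV P G) B s n =
           (case B ! ((s + n) mod length B) of (u, v, c) \<Rightarrow> (u, v, port_to ch v c))"
  by (rule msg_on_boundary[OF assms(5) assms(6)])

end
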